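(* Let $k,d\in\mathbb{N}$, $\mathbf{l}\in\mathbb{N}^{d^2}$ and $\mathbf{i}\in I_{\mathbf{l}}$. Define $\Phi_{\mathbf{l},\mathbf{i}}:[0,1]^{d\times d}\to[0,1]^{d\times d}$ by $[\Phi_{\mathbf{l},\mathbf{i}}(X)]_{m,n}=\phi_{l_j,i_j}([X]_{m,n})$ with $j=(m-1)d+n$, for $m,n\in\{1,\dots,d\}$. Then $\Phi_{\mathbf{l},\mathbf{i}}\in \mathcal{C}^{W,L}_{2k+1}(\mathbb{R}^{d\times d},\mathbb{R}^{d\times d})$ (i.e. coincides on $[0,1]^{d\times d}$ with a member of this class) with $W=2d^2$ and $L=\lfloor\frac{5}{2}d\rfloor+3$.
   Context: Hat functions: $\phi(x)=1-|x|$ for $x\in[-1,1]$, $0$ otherwise; for $l\in\mathbb N$, $h_l=2^{-l}$, $x_{l,i}=ih_l$, $\phi_{l,i}(x)=\phi((x-x_{l,i})/h_l)$. For $\mathbf l\in\mathbb N^{d^2}$, $I_{\mathbf l}=\{\mathbf i\in\mathbb N^{d^2}:1\le i_j\le 2^{l_j}-1,\ i_j\text{ odd for all }j\}$. CNN notation: ReLU $\sigma(x)=\max\{x,0\}$ entrywise; $\mathbb R^{d\times d}\cong\mathbb R^{1\times d\times d}$; for $X\in\mathbb R^{c\times d\times d}$, zero padding $[\iota(X)]_{q,m,n}=[X]_{q,m,n}$ if $m,n\in\{1,\dots,d\}$, else $0$; for $K\in\mathbb R^{c'\times c\times(2k+1)\times(2k+1)}$ (indices $s,t\in\{-k,\dots,k\}$),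 $[K*X]_{p,m,n}=\sum_q\sum_{s,t=-k}^k[K]_{p,q,s,t}[\iota(X)]_{q,m+s,n+t}$; $A_{K,\mathbf b}(X)=K*X+\mathbf b\mathbf 1_{d\times d}$, $[\mathbf b\mathbf 1_{d\times d}]_{p,m,n}=b_p$. An $L$-layer ReLU CNN with channels $c_0,\dots,c_L$ and kernel spatial size $2k+1$ is $\sigma\circ A_{K^L,\mathbf b^L}\circ\cdots\circ\sigma\circ A_{K^1,\mathbf b^1}$, $K^l\in\mathbb R^{c_l\times c_{l-1}\times(2k+1)\times(2k+1)}$, $\mathbf b^l\in\mathbb R^{c_l}$; width $\max\{c_1,\dots,c_L\}$, depth $L$. $\mathcal C^{W,L}_{2k+1}(\mathbb R^{c_0\times d\times d},\mathbb R^{c_L\times d\times d})$ is the set of such maps of width $W$ and depth $L$. *)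

theory Defs
  imports Complex_Main
begin

definition hat :: "real \<Rightarrow> real" where
  "hat x = (if \<bar>x\<bar> \<le> 1 then 1 - \<bar>x\<bar> else 0)"

definition hat_li :: "nat \<Rightarrow> nat \<Rightarrow> real \<Rightarrow> real" where
  "hat_li l i x = hat ((x - real i * (1/2)^l) / (1/2)^l)"

definition I_set :: "nat \<Rightarrow> (nat \<Rightarrow> nat) \<Rightarrow> (nat \<Rightarrow> nat) set" where
  "I_set N l = {i. \<forall>j\<in>{1..N}. 1 \<le> i j \<and> i j \<le> 2 ^ l j - 1 \<and> odd (i j)}"

text \<open>A tensor in R^{c x d x d}: channel index (1..c), row index, column index (1..d).
  Spatial indices are integers so that padding can be expressed.\<close>
type_synonym tensor = "nat \<Rightarrow> int \<Rightarrow> int \<Rightarrow> real"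
text \<open>Kernel entries [K]_{p,q,s,t}, s,t in -k..k.\<close>
type_synonym kernel = "nat \<Rightarrow> nat \<Rightarrow> int \<Rightarrow> int \<Rightarrow> real"

definition relu :: "real \<Rightarrow> real" where
  "relu x = max x 0"

definition zpad :: "nat \<Rightarrow> tensor \<Rightarrow> tensor" where
  "zpad d X q m n = (if 1 \<le> m \<and> m \<le> int d \<and> 1 \<le> n \<and> n \<le> int d then X q m n else 0)"

definition conv :: "nat \<Rightarrow> nat \<Rightarrow> nat \<Rightarrow> kernel \<Rightarrow> tensor \<Rightarrow> tensor" where
  "conv d k c K X p m n =
     (\<Sum>q\<in>{1..c}. \<Sum>s\<in>{-int k..int k}. \<Sum>t\<in>{-int k..int k}.
        K p q s t * zpad d X q (m + s) (n + t))"

definition cnn_layer :: "nat \<Rightarrow> nat \<Rightarrow> nat \<Rightarrow> kernel \<Rightarrow> (nat \<Rightarrow> real) \<Rightarrow> tensor \<Rightarrow> tensor" where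
  "cnn_layer d k c K b X p m n = relu (conv d k c K X p m n + b p)"

text \<open>A layer is (c_in, c_out, K, b).\<close>
type_synonym layer = "nat \<times> nat \<times> kernel \<times> (nat \<Rightarrow> real)"

fun cnn_eval :: "nat \<Rightarrow> nat \<Rightarrow> layer list \<Rightarrow> tensor \<Rightarrow> tensor" where
  "cnn_eval d k [] X = X"
| "cnn_eval d k ((c, c', K, b) # Ls) X = cnn_eval d k Ls (cnn_layer d k c K b X)"

definition layer_cin :: "layer \<Rightarrow> nat" where "layer_cin L = fst L"
definition layer_cout :: "layer \<Rightarrow> nat" where "layer_cout L = fst (snd L)"

definition cnn_arch :: "nat \<Rightarrow> nat \<Rightarrow> nat \<Rightarrow> nat \<Rightarrow> layer list \<Rightarrow> bool" where
  "cnn_arch c0 cL W Lnum Ls \<longleftrightarrow>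
     Lnum \<ge> 1 \<and> length Ls = Lnum \<and>
     layer_cin (Ls ! 0) = c0 \<and> layer_cout (Ls ! (Lnum - 1)) = cL \<and>
     (\<forall>j. Suc j < Lnum \<longrightarrow> layer_cout (Ls ! j) = layer_cin (Ls ! Suc j)) \<and>
     W = Max (layer_cout ` set Ls)"

definition CNN_class :: "nat \<Rightarrow> nat \<Rightarrow> nat \<Rightarrow> nat \<Rightarrow> nat \<Rightarrow> nat \<Rightarrow> (tensor \<Rightarrow> tensor) set" where
  "CNN_class d k c0 cL W Lnum = {f. \<exists>Ls. cnn_arch c0 cL W Lnum Ls \<and> f = cnn_eval d k Ls}"

end

theory Submission
  imports Defs
begin


definition ck :: "(nat \<Rightarrow> int) \<Rightarrow> (nat \<Rightarrow> int) \<Rightarrow> (nat \<Rightarrow> nat \<Rightarrow> real) \<Rightarrow> kernel" where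
  "ck S T W p q s t = (if s = S p \<and> t = T p then W p q else 0)"

lemma sum_if_mult: "finite A \<Longrightarrow> (\<Sum>t\<in>A. (if t = a then w else 0) * f t) = (if a \<in> A then w * f a else (0::real))"
proof -
  assume "finite A"
  have "(\<Sum>t\<in>A. (if t = a then w else 0) * f t) = (\<Sum>t\<in>A. if t = a then w * f t else 0)"
    by (rule sum.cong) auto
  then show ?thesis using \<open>finite A\<close> by (simp add: sum.delta)
qed

lemma conv_ck:
  assumes "\<bar>S p\<bar> \<le> int k" "\<bar>T p\<bar> \<le> int k"
  shows "conv d k c (ck S T W) Y p m n = (\<Sum>q\<in>{1..c}. W p q * zpad d Y q (m + S p) (n + T p))"
proof -
  have "\<And>q. (\<Sum>s\<in>{-int k..int k}. \<Sum>t\<in>{-int k..int k}. ck S T W p q s t * zpad d Y q (m + s) (n + t))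
     = W p q * zpad d Y q (m + S p) (n + T p)"
  proof -
    fix q
    have eq: "\<And>s t. ck S T W p q s t * zpad d Y q (m + s) (n + t) = (if s = S p then (if t = T p then W p q * zpad d Y q (m + s) (n + t) else 0) else 0)"
      by (simp add: ck_def)
    have "(\<Sum>s\<in>{-int k..int k}. \<Sum>t\<in>{-int k..int k}. ck S T W p q s t * zpad d Y q (m + s) (n + t))
      = (\<Sum>s\<in>{-int k..int k}. \<Sum>t\<in>{-int k..int k}. if s = S p then (if t = T p then W p q * zpad d Y q (m + s) (n + t) else 0) else 0)"
      by (simp only: eq)
    also have "\<dots> = (\<Sum>s\<in>{-int k..int k}. if s = S p then (\<Sum>t\<in>{-int k..int k}. if t = T p then W p q * zpad d Y q (m + s) (n + t) else 0) else 0)"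
      by (rule sum.cong) auto
    also have "\<dots> = W p q * zpad d Y q (m + S p) (n + T p)"
      using assms by (simp only: sum.delta finite_atLeastAtMost_int) (simp add: abs_le_iff)
    finally show "?thesis q" .
  qed
  then show ?thesis unfolding conv_def by simp
qed

lemma hat_relu: "relu (1 - relu w - relu (-w)) = hat w"
  unfolding relu_def hat_def by auto

lemma cnn_eval_append: "cnn_eval d k (xs @ ys) X = cnn_eval d k ys (cnn_eval d k xs X)"
  by (induction xs arbitrary: X) auto

fun lchain :: "nat \<Rightarrow> layer list \<Rightarrow> nat \<Rightarrow> bool" where
  "lchain c [] c' = (c = c')"
| "lchain c ((a, b, K, bb) # Ls) c' = (a = c \<and> lchain b Ls c')"

lemma chain_append: "lchain c (xs @ ys) c'' \<longleftrightarrow> (\<exists>c'. lchain c xs c' \<and> lchain c' ys c'')"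
  by (induction c xs c'' rule: lchain.induct) auto

lemma chain_rep: "lchain c (replicate n (c, c, K, b)) c"
  by (induction n) auto

lemma chain_idx:
  "lchain c Ls c' \<Longrightarrow> Ls \<noteq> [] \<Longrightarrow> layer_cin (Ls ! 0) = c \<and> layer_cout (Ls ! (length Ls - 1)) = c' \<and>
     (\<forall>j. Suc j < length Ls \<longrightarrow> layer_cout (Ls ! j) = layer_cin (Ls ! Suc j))"
proof (induction c Ls c' rule: lchain.induct)
  case (1 c c')
  then show ?case by simp
next
  case (2 c a b K bb Ls c')
  show ?case
  proof (cases "Ls = []")
    case True
    then show ?thesis using 2 by (simp add: layer_cin_def layer_cout_def)
  next
    case False
    then obtain a' b' K' bb' Ls' where Ls: "Ls = (a', b', K', bb') # Ls'" by (cases Ls) auto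
    have IH: "layer_cin (Ls ! 0) = b \<and> layer_cout (Ls ! (length Ls - 1)) = c' \<and>
     (\<forall>j. Suc j < length Ls \<longrightarrow> layer_cout (Ls ! j) = layer_cin (Ls ! Suc j))"
      using 2 False by auto
    show ?thesis
    proof (intro conjI allI impI)
      show "layer_cin (((a, b, K, bb) # Ls) ! 0) = c" using 2 by (simp add: layer_cin_def)
      show "layer_cout (((a, b, K, bb) # Ls) ! (length ((a, b, K, bb) # Ls) - 1)) = c'"
        using IH False by (simp add: nth_Cons')
    next
      fix j assume j: "Suc j < length ((a, b, K, bb) # Ls)"
      show "layer_cout (((a, b, K, bb) # Ls) ! j) = layer_cin (((a, b, K, bb) # Ls) ! Suc j)"
      proof (cases j)
        case 0 then show ?thesis using IH by (simp add: layer_cout_def)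
      next
        case (Suc j') then show ?thesis using IH j by simp
      qed
    qed
  qed
qed

lemma arch_intro:
  assumes "lchain c0 Ls cL" "Ls \<noteq> []" "length Ls = Lnum" "W = Max (layer_cout ` set Ls)"
  shows "cnn_arch c0 cL W Lnum Ls"
  using chain_idx[OF assms(1,2)] assms unfolding cnn_arch_def by (cases Ls) auto



definition Kc :: kernel where
  "Kc = ck (\<lambda>p. if p = 2 then -1 else 0) (\<lambda>p. if p = 3 then -1 else 0) (\<lambda>p q. if q = p then 1 else 0)"
definition bc :: "nat \<Rightarrow> real" where "bc p = (if p = 1 then 0 else 1)"

definition cinv :: "nat \<Rightarrow> tensor \<Rightarrow> tensor \<Rightarrow> int \<Rightarrow> bool" where
  "cinv d X Y t = (\<forall>m\<in>{1..int d}. \<forall>n\<in>{1..int d}. Y 1 m n = X 1 m n \<and>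
      Y 2 m n = real_of_int (min m t) \<and> Y 3 m n = real_of_int (min n t))"

lemma sum_sel: "finite A \<Longrightarrow> (\<Sum>q\<in>A. (if q = a then 1 else 0) * f q) = (if a \<in> A then f a else (0::real))"
  using sum_if_mult[of A a 1 f] by simp

lemma conv_Kc:
  assumes k: "k \<ge> 1"
  shows "conv d k c Kc Y p m n = (\<Sum>q\<in>{1..c}. (if q = p then 1 else 0) * zpad d Y q (m + (if p = 2 then -1 else 0)) (n + (if p = 3 then -1 else 0)))"
  unfolding Kc_def by (rule conv_ck) (use k in auto)

lemma counter_step:
  assumes k: "k \<ge> 1" and c: "(c = 1 \<and> t = 0) \<or> (c = 3 \<and> cinv d X Y t)" and t: "t \<ge> 0"
    and X: "\<forall>m\<in>{1..int d}. \<forall>n\<in>{1..int d}. 0 \<le> X 1 m n"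
    and Y1: "\<forall>m\<in>{1..int d}. \<forall>n\<in>{1..int d}. Y 1 m n = X 1 m n"
  shows "cinv d X (cnn_layer d k c Kc bc Y) (t + 1)"
  unfolding cinv_def
proof (intro ballI conjI)
  fix m n assume m: "m \<in> {1..int d}" and n: "n \<in> {1..int d}"
  note cv = conv_Kc[OF k]
  have c1: "1 \<in> {1..c}" using c by auto
  show "cnn_layer d k c Kc bc Y 1 m n = X 1 m n"
    unfolding cnn_layer_def cv using m n X Y1 c1
    by (simp add: sum_sel zpad_def relu_def bc_def)
  show "cnn_layer d k c Kc bc Y 2 m n = real_of_int (min m (t + 1))"
  proof (cases "c = 1")
    case True
    then have "t = 0" using c by auto
    then show ?thesis using True m unfolding cnn_layer_def cv
      by (simp add: sum_sel zpad_def relu_def bc_def)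
  next
    case False
    then have c3: "c = 3" and ci: "cinv d X Y t" using c by auto
    show ?thesis
    proof (cases "m = 1")
      case True
      then show ?thesis using c3 t unfolding cnn_layer_def cv
        by (simp add: sum_sel zpad_def relu_def bc_def)
    next
      case False
      then have "m - 1 \<in> {1..int d}" using m by auto
      then have "Y 2 (m - 1) n = real_of_int (min (m - 1) t)" using ci n unfolding cinv_def by blast
      then show ?thesis using c3 t m n False unfolding cnn_layer_def cv
        by (simp add: sum_sel zpad_def relu_def bc_def)
    qed
  qed
  show "cnn_layer d k c Kc bc Y 3 m n = real_of_int (min n (t + 1))"
  proof (cases "c = 1")
    case True
    then have "t = 0" using c by auto
    then show ?thesis using True n unfolding cnn_layer_def cv
      by (simp add: sum_sel zpad_def relu_def bc_def)
  next
    case False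
    then have c3: "c = 3" and ci: "cinv d X Y t" using c by auto
    show ?thesis
    proof (cases "n = 1")
      case True
      then show ?thesis using c3 t unfolding cnn_layer_def cv
        by (simp add: sum_sel zpad_def relu_def bc_def)
    next
      case False
      then have "n - 1 \<in> {1..int d}" using n by auto
      then have "Y 3 m (n - 1) = real_of_int (min (n - 1) t)" using ci m unfolding cinv_def by blast
      then show ?thesis using c3 t m n False unfolding cnn_layer_def cv
        by (simp add: sum_sel zpad_def relu_def bc_def)
    qed
  qed
qed

lemma counter_rep:
  assumes k: "k \<ge> 1" and X: "\<forall>m\<in>{1..int d}. \<forall>n\<in>{1..int d}. 0 \<le> X 1 m n"
  shows "cinv d X Y t \<Longrightarrow> t \<ge> 0 \<Longrightarrow> cinv d X (cnn_eval d k (replicate r (3, 3, Kc, bc)) Y) (t + int r)"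
proof (induction r arbitrary: Y t)
  case 0
  then show ?case by simp
next
  case (Suc r)
  have "cinv d X (cnn_layer d k 3 Kc bc Y) (t + 1)"
    using counter_step[where c=3 and Y=Y and t=t and X=X and d=d and k=k] k X Suc.prems by (auto simp: cinv_def)
  from Suc.IH[OF this] Suc.prems show ?case by (simp add: add.assoc)
qed

lemma counters:
  assumes k: "k \<ge> 1" and X: "\<forall>m\<in>{1..int d}. \<forall>n\<in>{1..int d}. 0 \<le> X 1 m n"
  shows "cinv d X (cnn_eval d k ((1, 3, Kc, bc) # replicate r (3, 3, Kc, bc)) X) (1 + int r)"
proof -
  have "cinv d X (cnn_layer d k 1 Kc bc X) (0 + 1)"
    using counter_step[where c=1 and Y=X and t=0 and X=X and d=d and k=k] k X by auto
  from counter_rep[OF k X this] show ?thesis by simp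
qed



abbreviation ck0 :: "(nat \<Rightarrow> nat \<Rightarrow> real) \<Rightarrow> kernel" where "ck0 W \<equiv> ck (\<lambda>_. 0) (\<lambda>_. 0) W"

lemma conv_ck0:
  assumes "m \<in> {1..int d}" "n \<in> {1..int d}"
  shows "conv d k c (ck0 W) Y p m n = (\<Sum>q\<in>{1..c}. W p q * Y q m n)"
  using assms by (subst conv_ck) (auto simp: zpad_def)

lemma sum3:
  fixes f :: "nat \<Rightarrow> real"
  assumes "finite A" "a \<in> A" "b \<in> A" "c \<in> A"
  shows "(\<Sum>r\<in>A. ((if r = a then \<alpha> else 0) + (if r = b then \<beta> else 0) - (if r = c then \<gamma> else 0)) * f r)
     = \<alpha> * f a + \<beta> * f b - \<gamma> * f (c::nat)"
proof -
  have "(\<Sum>r\<in>A. ((if r = a then \<alpha> else 0) + (if r = b then \<beta> else 0) - (if r = c then \<gamma> else 0)) * f r)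
    = (\<Sum>r\<in>A. (if r = a then \<alpha> else 0) * f r) + (\<Sum>r\<in>A. (if r = b then \<beta> else 0) * f r) - (\<Sum>r\<in>A. (if r = c then \<gamma> else 0) * f r)"
    by (simp add: algebra_simps sum.distrib sum_subtractf)
  also have "\<dots> = \<alpha> * f a + \<beta> * f b - \<gamma> * f c"
    using assms by (simp only: sum_if_mult) simp
  finally show ?thesis .
qed

definition W1 :: "nat \<Rightarrow> (nat \<Rightarrow> real) \<Rightarrow> nat \<Rightarrow> nat \<Rightarrow> real" where
  "W1 N V q r = (if q \<le> N then V r else if q = N + 1 then (if r = 1 then 1 else 0) else 0)"
definition b1 :: "nat \<Rightarrow> real \<Rightarrow> nat \<Rightarrow> real" where
  "b1 N \<gamma> q = (if q \<le> N then \<gamma> - real q else 0)"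
definition MM :: "(nat \<Rightarrow> nat) \<Rightarrow> nat \<Rightarrow> real" where "MM i j = real (i j) + 1"
definition wv :: "nat \<Rightarrow> (nat \<Rightarrow> nat) \<Rightarrow> (nat \<Rightarrow> nat) \<Rightarrow> nat \<Rightarrow> nat \<Rightarrow> real" where
  "wv N l i j r = (if r = N + 1 then 2 ^ l j else 0) + (if r = j then 2 * MM i j else 0) - (if r = 1 then MM i j else 0)"
definition wb :: "(nat \<Rightarrow> nat) \<Rightarrow> nat \<Rightarrow> real" where
  "wb i j = MM i j * (real j - 1) - real (i j)"
definition W2 :: "nat \<Rightarrow> (nat \<Rightarrow> nat) \<Rightarrow> (nat \<Rightarrow> nat) \<Rightarrow> nat \<Rightarrow> nat \<Rightarrow> real" where
  "W2 N l i q r = (if q \<le> N then wv N l i q r else - wv N l i (q - N) r)"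
definition b2 :: "nat \<Rightarrow> (nat \<Rightarrow> nat) \<Rightarrow> nat \<Rightarrow> real" where
  "b2 N i q = (if q \<le> N then wb i q else - wb i (q - N))"
definition W3 :: "nat \<Rightarrow> nat \<Rightarrow> nat \<Rightarrow> real" where
  "W3 N q r = (if r = q then 0 else 0) + (if r = N + q then -1 else 0) - (if r = q then 1 else 0)"

definition tail :: "nat \<Rightarrow> nat \<Rightarrow> (nat \<Rightarrow> real) \<Rightarrow> real \<Rightarrow> (nat \<Rightarrow> nat) \<Rightarrow> (nat \<Rightarrow> nat) \<Rightarrow> layer list" where
  "tail N cin V \<gamma> l i = [(cin, N + 1, ck0 (W1 N V), b1 N \<gamma>), (N + 1, 2 * N, ck0 (W2 N l i), b2 N i),
     (2 * N, N, ck0 (W3 N), \<lambda>_. 1), (N, 1, ck0 (\<lambda>q r. 1), \<lambda>_. 0)]"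

lemma hat_li_eq: "hat_li l i x = hat (2 ^ l * x - real i)"
proof -
  have "(x - real i * (1/2)^l) / (1/2)^l = 2 ^ l * x - real i"
    by (simp add: power_one_over divide_simps)
  then show ?thesis unfolding hat_li_def by simp
qed

lemma tail_ok:
  assumes m: "m \<in> {1..int d}" and n: "n \<in> {1..int d}" and cin: "cin \<ge> 1"
    and pdef: "(\<Sum>r\<in>{1..cin}. V r * Y r m n) + \<gamma> = real p"
    and p: "1 \<le> p" "p \<le> N"
    and Y1: "Y 1 m n = x" and x: "0 \<le> x"
  shows "cnn_eval d k (tail N cin V \<gamma> l i) Y 1 m n = hat_li (l p) (i p) x"
proof -
  define Z where "Z = cnn_layer d k cin (ck0 (W1 N V)) (b1 N \<gamma>) Y"
  have Zr: "Z q m n = relu (real p - real q)" if "1 \<le> q" "q \<le> N" for q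
    using that pdef unfolding Z_def cnn_layer_def conv_ck0[OF m n] by (simp add: W1_def b1_def add_diff_eq)
  have Zx: "Z (N + 1) m n = x"
  proof -
    have "(\<Sum>r\<in>{1..cin}. W1 N V (N + 1) r * Y r m n) = (\<Sum>r\<in>{1..cin}. (if r = 1 then 1 else 0) * Y r m n)"
      by (simp add: W1_def)
    also have "\<dots> = x" using cin Y1 by (simp only: sum_sel finite_atLeastAtMost) simp
    finally show ?thesis unfolding Z_def cnn_layer_def conv_ck0[OF m n] using x
      by (simp add: b1_def relu_def)
  qed
  define w where "w j = 2 ^ l j * x - real (i j) + MM i j * \<bar>real p - real j\<bar>" for j
  define A where "A = cnn_layer d k (N + 1) (ck0 (W2 N l i)) (b2 N i) Z"
  have lin: "(\<Sum>r\<in>{1..N+1}. wv N l i j r * Z r m n) + wb i j = w j" if j: "1 \<le> j" "j \<le> N" for j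
  proof -
    have "(\<Sum>r\<in>{1..N+1}. wv N l i j r * Z r m n) = 2 ^ l j * Z (N+1) m n + 2 * MM i j * Z j m n - MM i j * Z 1 m n"
      unfolding wv_def using j by (intro sum3) auto
    also have "\<dots> = 2 ^ l j * x + 2 * MM i j * relu (real p - real j) - MM i j * (real p - 1)"
      using Zx Zr[of j] Zr[of 1] j p by (simp add: relu_def)
    finally have e: "(\<Sum>r\<in>{1..N+1}. wv N l i j r * Z r m n) = 2 ^ l j * x + 2 * MM i j * relu (real p - real j) - MM i j * (real p - 1)" .
    have "2 ^ l j * x + 2 * MM i j * relu (real p - real j) - MM i j * (real p - 1) + wb i j = w j"
      unfolding w_def wb_def relu_def
      by (cases "p \<le> j") (simp_all add: algebra_simps)
    then show ?thesis using e by simp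
  qed
  have Aa: "A j m n = relu (w j)" if "1 \<le> j" "j \<le> N" for j
    using that lin[OF that] unfolding A_def cnn_layer_def conv_ck0[OF m n] by (simp add: W2_def b2_def)
  have Ab: "A (N + j) m n = relu (- w j)" if "1 \<le> j" "j \<le> N" for j
  proof -
    have "(\<Sum>r\<in>{1..N+1}. W2 N l i (N + j) r * Z r m n) + b2 N i (N + j) = - (\<Sum>r\<in>{1..N+1}. wv N l i j r * Z r m n) - wb i j"
      using that by (simp add: W2_def b2_def sum_negf)
    also have "\<dots> = - w j" using lin[OF that] by linarith
    finally show ?thesis unfolding A_def cnn_layer_def conv_ck0[OF m n] by simp
  qed
  define H where "H = cnn_layer d k (2 * N) (ck0 (W3 N)) (\<lambda>_. 1) A"
  have Hj: "H j m n = hat (w j)" if j: "1 \<le> j" "j \<le> N" for j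
  proof -
    have "(\<Sum>r\<in>{1..2*N}. W3 N j r * A r m n) = 0 * A j m n + (-1) * A (N + j) m n - 1 * A j m n"
      unfolding W3_def using j sum3[of "{1..2*N}" j "N+j" j 0 "-1" 1 "\<lambda>r. A r m n"] by simp
    then have e: "(\<Sum>r\<in>{1..2*N}. W3 N j r * A r m n) + 1 = 1 - relu (w j) - relu (- w j)"
      using Aa[OF j] Ab[OF j] by simp
    show ?thesis unfolding H_def cnn_layer_def conv_ck0[OF m n] hat_relu[symmetric] e ..
  qed
  have Hs: "(\<Sum>j\<in>{1..N}. H j m n) = hat_li (l p) (i p) x"
  proof -
    have "(\<Sum>j\<in>{1..N}. H j m n) = (\<Sum>j\<in>{1..N}. if j = p then hat (w p) else 0)"
    proof (rule sum.cong)
      fix j assume j: "j \<in> {1..N}"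
      show "H j m n = (if j = p then hat (w p) else 0)"
      proof (cases "j = p")
        case True then show ?thesis using Hj j by auto
      next
        case False
        then have "\<bar>real p - real j\<bar> \<ge> 1" by linarith
        then have "MM i j * \<bar>real p - real j\<bar> \<ge> MM i j"
          unfolding MM_def by (simp add: mult_le_cancel_left1)
        moreover have "0 \<le> 2 ^ l j * x" using x by simp
        ultimately have "w j \<ge> 1" unfolding w_def MM_def by linarith
        then have "hat (w j) = 0" unfolding hat_def by auto
        then show ?thesis using Hj j False by auto
      qed
    qed simp
    also have "\<dots> = hat (w p)" using p by (simp add: sum.delta')
    also have "\<dots> = hat_li (l p) (i p) x" unfolding w_def hat_li_eq by simp
    finally show ?thesis .
  qed
  have "cnn_eval d k (tail N cin V \<gamma> l i) Y = cnn_layer d k N (ck0 (\<lambda>q r. 1)) (\<lambda>_. 0) H"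
    unfolding tail_def H_def A_def Z_def by simp
  then have "cnn_eval d k (tail N cin V \<gamma> l i) Y 1 m n = relu (\<Sum>j\<in>{1..N}. H j m n)"
    by (simp add: cnn_layer_def conv_ck0[OF m n])
  moreover have "hat_li (l p) (i p) x \<ge> 0" by (simp add: hat_li_def hat_def)
  ultimately show ?thesis using Hs by (simp add: relu_def)
qed



definition PadL :: layer where "PadL = (1, 1, ck0 (\<lambda>q r. 1), \<lambda>_. 0)"

lemma pad_ok:
  "(\<forall>m\<in>{1..int d}. \<forall>n\<in>{1..int d}. Y 1 m n \<ge> 0) \<Longrightarrow>
   (\<forall>m\<in>{1..int d}. \<forall>n\<in>{1..int d}. cnn_eval d k (replicate r PadL) Y 1 m n = Y 1 m n)"
proof (induction r arbitrary: Y)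
  case 0
  then show ?case by simp
next
  case (Suc r)
  have e: "\<forall>m\<in>{1..int d}. \<forall>n\<in>{1..int d}. cnn_layer d k 1 (ck0 (\<lambda>q r. 1)) (\<lambda>_. 0) Y 1 m n = Y 1 m n"
    using Suc.prems by (auto simp: cnn_layer_def conv_ck0 relu_def)
  have "\<forall>m\<in>{1..int d}. \<forall>n\<in>{1..int d}. cnn_layer d k 1 (ck0 (\<lambda>q r. 1)) (\<lambda>_. 0) Y 1 m n \<ge> 0"
    using Suc.prems e by auto
  from Suc.IH[where Y="cnn_layer d k 1 (ck0 (\<lambda>q r. 1)) (\<lambda>_. 0) Y", OF this] e show ?case by (simp add: PadL_def)
qed

lemma chain_tail: "lchain c (tail N c V \<gamma> l i) 1"
  unfolding tail_def by simp

lemma setout_tail: "layer_cout ` set (tail N c V \<gamma> l i) = {N + 1, 2 * N, N, 1}"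
  unfolding tail_def by (auto simp: layer_cout_def)

lemma floor_bound: "nat \<lfloor>5/2 * real d\<rfloor> \<ge> 2 * d"
proof -
  have "real (2 * d) \<le> 5/2 * real d" by simp
  then have "int (2 * d) \<le> \<lfloor>5/2 * real d\<rfloor>" by (simp add: le_floor_iff)
  then show ?thesis by linarith
qed

lemma idx_bounds:
  assumes "m \<in> {1..int d}" "n \<in> {1..int d}"
  shows "1 \<le> nat ((m - 1) * int d + n)" "nat ((m - 1) * int d + n) \<le> d^2"
    "real (nat ((m - 1) * int d + n)) = real_of_int ((m - 1) * int d + n)"
proof -
  have h0: "0 \<le> (m - 1) * int d" using assms by auto
  have "(m - 1) * int d \<le> (int d - 1) * int d" using assms by (intro mult_right_mono) auto
  then have "(m - 1) * int d + n \<le> (int d - 1) * int d + int d" using assms by (simp add: add_mono)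
  also have "(int d - 1) * int d + int d = int d * int d" by (simp add: algebra_simps)
  finally have "(m - 1) * int d + n \<le> int d * int d" .
  then show "nat ((m - 1) * int d + n) \<le> d^2" by (simp add: power2_eq_square nat_le_iff)
  have "1 \<le> n" using assms by simp
  then have "1 \<le> (m - 1) * int d + n" using h0 by linarith
  then show "1 \<le> nat ((m - 1) * int d + n)" using nat_mono by fastforce
  show "real (nat ((m - 1) * int d + n)) = real_of_int ((m - 1) * int d + n)" using \<open>1 \<le> (m - 1) * int d + n\<close> by simp
qed



lemma generic:
  fixes k d :: nat and l i :: "nat \<Rightarrow> nat" and P :: "layer list"
  assumes d: "d \<ge> 1" and cin: "cin \<ge> 1"
    and ch: "lchain 1 P cin" and cout: "\<forall>L\<in>set P. layer_cout L \<le> 2 * d^2"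
    and len: "length P + 4 \<le> nat \<lfloor>5/2 * real d\<rfloor> + 3"
    and sem: "\<And>X m n. (\<forall>m\<in>{1..int d}. \<forall>n\<in>{1..int d}. 0 \<le> X 1 m n \<and> X 1 m n \<le> 1) \<Longrightarrow>
        m \<in> {1..int d} \<Longrightarrow> n \<in> {1..int d} \<Longrightarrow>
        (\<Sum>r\<in>{1..cin}. V r * cnn_eval d k P X r m n) + \<gamma> = real (nat ((m - 1) * int d + n))
        \<and> cnn_eval d k P X 1 m n = X 1 m n"
  shows "\<exists>f \<in> CNN_class d k 1 1 (2 * d^2) (nat \<lfloor>5/2 * real d\<rfloor> + 3).
           \<forall>X :: tensor.
             (\<forall>m\<in>{1..int d}. \<forall>n\<in>{1..int d}. 0 \<le> X 1 m n \<and> X 1 m n \<le> 1) \<longrightarrow>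
             (\<forall>m\<in>{1..int d}. \<forall>n\<in>{1..int d}.
                f X 1 m n = hat_li (l (nat ((m - 1) * int d + n))) (i (nat ((m - 1) * int d + n))) (X 1 m n))"
proof -
  define N where "N = d^2"
  define Ln where "Ln = nat \<lfloor>5/2 * real d\<rfloor> + 3"
  define Ls where "Ls = P @ tail N cin V \<gamma> l i @ replicate (Ln - length P - 4) PadL"
  have N1: "N \<ge> 1" using d unfolding N_def by simp
  have arch: "cnn_arch 1 1 (2 * d^2) Ln Ls"
  proof (rule arch_intro)
    show "lchain 1 Ls 1" unfolding Ls_def chain_append PadL_def
      using ch chain_tail chain_rep by blast
    show "Ls \<noteq> []" unfolding Ls_def tail_def by simp
    show "length Ls = Ln" unfolding Ls_def tail_def using len unfolding Ln_def by simp
    have S: "layer_cout ` set Ls = layer_cout ` set P \<union> {N + 1, 2 * N, N, 1} \<union> layer_cout ` set (replicate (Ln - length P - 4) PadL)"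
      unfolding Ls_def by (simp add: setout_tail image_Un)
    show "2 * d^2 = Max (layer_cout ` set Ls)"
    proof (rule sym, rule Max_eqI)
      show "finite (layer_cout ` set Ls)" by simp
      show "2 * d^2 \<in> layer_cout ` set Ls" unfolding S N_def by simp
      fix y assume "y \<in> layer_cout ` set Ls"
      then show "y \<le> 2 * d^2" unfolding S using cout N1
        by (auto simp: N_def PadL_def layer_cout_def)
    qed
  qed
  show ?thesis
  proof (rule bexI[where x="cnn_eval d k Ls"])
    show "cnn_eval d k Ls \<in> CNN_class d k 1 1 (2 * d^2) (nat \<lfloor>5/2 * real d\<rfloor> + 3)"
      unfolding CNN_class_def using arch Ln_def by blast
    show "\<forall>X :: tensor.
             (\<forall>m\<in>{1..int d}. \<forall>n\<in>{1..int d}. 0 \<le> X 1 m n \<and> X 1 m n \<le> 1) \<longrightarrow>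
             (\<forall>m\<in>{1..int d}. \<forall>n\<in>{1..int d}.
                cnn_eval d k Ls X 1 m n = hat_li (l (nat ((m - 1) * int d + n))) (i (nat ((m - 1) * int d + n))) (X 1 m n))"
    proof (intro allI impI)
      fix X :: tensor
      assume X: "\<forall>m\<in>{1..int d}. \<forall>n\<in>{1..int d}. 0 \<le> X 1 m n \<and> X 1 m n \<le> 1"
      define T where "T = cnn_eval d k (tail N cin V \<gamma> l i) (cnn_eval d k P X)"
      have T: "T 1 m n = hat_li (l (nat ((m - 1) * int d + n))) (i (nat ((m - 1) * int d + n))) (X 1 m n)"
        if m: "m \<in> {1..int d}" and n: "n \<in> {1..int d}" for m n
        unfolding T_def
      proof (rule tail_ok[OF m n cin])
        show "(\<Sum>r\<in>{1..cin}. V r * cnn_eval d k P X r m n) + \<gamma> = real (nat ((m - 1) * int d + n))"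
          using sem[where X=X and m=m and n=n, OF X m n] by blast
        show "cnn_eval d k P X 1 m n = X 1 m n" using sem[where X=X and m=m and n=n, OF X m n] by blast
        show "0 \<le> X 1 m n" using X m n by blast
        show "1 \<le> nat ((m - 1) * int d + n)" using idx_bounds[OF m n] by blast
        show "nat ((m - 1) * int d + n) \<le> N" using idx_bounds[OF m n] unfolding N_def by blast
      qed
      have "\<forall>m\<in>{1..int d}. \<forall>n\<in>{1..int d}. T 1 m n \<ge> 0"
        using T by (simp add: hat_li_def hat_def)
      from pad_ok[where Y=T and d=d and k=k and r="Ln - length P - 4", OF this] T
      show "\<forall>m\<in>{1..int d}. \<forall>n\<in>{1..int d}.
                cnn_eval d k Ls X 1 m n = hat_li (l (nat ((m - 1) * int d + n))) (i (nat ((m - 1) * int d + n))) (X 1 m n)"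
        unfolding Ls_def T_def by (simp add: cnn_eval_append)
    qed
  qed
qed



theorem lemmaC2:
  fixes k d :: nat and l i :: "nat \<Rightarrow> nat"
  assumes "k \<ge> 1" and "d \<ge> 1"
    and "\<forall>j\<in>{1..d^2}. l j \<ge> 1"
    and "i \<in> I_set (d^2) l"
  shows "\<exists>f \<in> CNN_class d k 1 1 (2 * d^2) (nat \<lfloor>5/2 * real d\<rfloor> + 3).
           \<forall>X :: tensor.
             (\<forall>m\<in>{1..int d}. \<forall>n\<in>{1..int d}. 0 \<le> X 1 m n \<and> X 1 m n \<le> 1) \<longrightarrow>
             (\<forall>m\<in>{1..int d}. \<forall>n\<in>{1..int d}.
                f X 1 m n = hat_li (l (nat ((m - 1) * int d + n))) (i (nat ((m - 1) * int d + n))) (X 1 m n))"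
proof -
  have Lb: "2 * d + 3 \<le> nat \<lfloor>5/2 * real d\<rfloor> + 3" using floor_bound[of d] by simp
  show ?thesis
  proof (cases "d = 1")
    case True
    show ?thesis
    proof (rule generic[where P="[]" and cin=1 and V="\<lambda>_. 0" and \<gamma>=1])
      show "length [] + 4 \<le> nat \<lfloor>5/2 * real d\<rfloor> + 3" using Lb True by simp
      fix X :: tensor and m n
      assume "m \<in> {1..int d}" "n \<in> {1..int d}"
      then have "m = 1" "n = 1" using True by auto
      then show "(\<Sum>r\<in>{1..1}. 0 * cnn_eval d k [] X r m n) + 1 = real (nat ((m - 1) * int d + n)) \<and>
        cnn_eval d k [] X 1 m n = X 1 m n" by simp
    qed (use assms in auto)
  next
    case False
    then have d2: "d \<ge> 2" using assms by simp
    have sq: "4 \<le> d^2" using d2 power_mono[of 2 d 2] by simp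
    show ?thesis
    proof (rule generic[where P="(1, 3, Kc, bc) # replicate (d - 1) (3, 3, Kc, bc)" and cin=3
          and V="\<lambda>r. if r = 2 then real d else if r = 3 then 1 else 0" and \<gamma>="- real d"])
      show "d \<ge> 1" using assms by simp
      show "lchain 1 ((1, 3, Kc, bc) # replicate (d - 1) (3, 3, Kc, bc)) 3" by (simp add: chain_rep)
      show "\<forall>L\<in>set ((1, 3, Kc, bc) # replicate (d - 1) (3, 3, Kc, bc)). layer_cout L \<le> 2 * d^2"
        using sq by (auto simp: layer_cout_def)
      show "length ((1, 3, Kc, bc) # replicate (d - 1) (3, 3, Kc, bc)) + 4 \<le> nat \<lfloor>5/2 * real d\<rfloor> + 3"
        using Lb d2 by simp
      fix X :: tensor and m n
      assume X: "\<forall>m\<in>{1..int d}. \<forall>n\<in>{1..int d}. 0 \<le> X 1 m n \<and> X 1 m n \<le> 1"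
        and m: "m \<in> {1..int d}" and n: "n \<in> {1..int d}"
      have "cinv d X (cnn_eval d k ((1, 3, Kc, bc) # replicate (d - 1) (3, 3, Kc, bc)) X) (1 + int (d - 1))"
        using counters[of k d X "d - 1"] assms X by auto
      moreover have "1 + int (d - 1) = int d" using d2 by simp
      ultimately have ci: "cinv d X (cnn_eval d k ((1, 3, Kc, bc) # replicate (d - 1) (3, 3, Kc, bc)) X) (int d)"
        by simp
      define Y where "Y = cnn_eval d k ((1, 3, Kc, bc) # replicate (d - 1) (3, 3, Kc, bc)) X"
      have Y: "Y 1 m n = X 1 m n" "Y 2 m n = real_of_int m" "Y 3 m n = real_of_int n"
        using ci m n unfolding cinv_def Y_def by auto
      have s3: "{1..3::nat} = {1, 2, 3}" by auto
      have "(\<Sum>r\<in>{1..3}. (if r = 2 then real d else if r = 3 then 1 else 0) * Y r m n) + - real d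
          = real_of_int ((m - 1) * int d + n)"
        unfolding s3 using Y by (simp add: algebra_simps)
      also have "\<dots> = real (nat ((m - 1) * int d + n))" using idx_bounds(3)[OF m n] by simp
      finally show "(\<Sum>r\<in>{1..3}. (if r = 2 then real d else if r = 3 then 1 else 0) *
          cnn_eval d k ((1, 3, Kc, bc) # replicate (d - 1) (3, 3, Kc, bc)) X r m n) + - real d =
          real (nat ((m - 1) * int d + n)) \<and>
          cnn_eval d k ((1, 3, Kc, bc) # replicate (d - 1) (3, 3, Kc, bc)) X 1 m n = X 1 m n"
        using Y unfolding Y_def by simp
    qed simp
  qed
qed


end
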